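(* Let $0<\varphi<\theta<1$ be constants, let $B_1,B_2,\dots$ be i.i.d. Bernoulli random variables with $\mathbb{P}(B_i=1)=\theta$, and let $\hat\Theta_n=\frac1n\sum_{i=1}^nB_i$. For each of $P=P_{\mathrm{CH},n}$, $P=P_{\mathrm{PBR},n}$ and $P=P_{\mathrm{X},n}$, $$\sqrt n\left(-\frac{\log P(\hat\Theta_n|\varphi)}{n}-\mathrm{KL}(\theta|\varphi)\right)\xrightarrow{D}N(0,\sigma_G^2),\qquad \sigma_G^2=\theta(1-\theta)\left(\log\Big(\frac{\theta}{1-\theta}\frac{1-\varphi}{\varphi}\Big)\right)^2,$$ where $\xrightarrow{D}$ denotes convergence in distribution and $N(\mu,\sigma^2)$ the normal distribution.
   Context: Logarithms are natural. $\mathrm{KL}(t|\varphi)=t\log(t/\varphi)+(1-t)\log\big((1-t)/(1-\varphi)\big)$. For an integer $n\ge1$, $0<\varphi<1$ and $t\in[0,1]$ with $nt$ an integer (convention $0^0=1$), define $P_{\mathrm{X},n}(t|\varphi)=\sum_{k\ge nt}\binom{n}{k}\varphi^k(1-\varphi)^{n-k}$; $P_{\mathrm{CH},n}(t|\varphi)=\left(\frac{\varphi}{t}\right)^{nt}\left(\frac{1-\varphi}{1-t}\right)^{n(1-t)}$ if $t\ge\varphi$, and $=1$ otherwise; $P_{\mathrm{PBR},n}(t|\varphi)=\varphi^{nt}(1-\varphi)^{n(1-t)}(n+1)\binom{n}{nt}$ if $t\ge\varphi$, and $=t^{nt}(1-t)^{n(1-t)}(n+1)\binom{n}{nt}$ otherwise.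 *)

theory Defs
  imports "HOL-Probability.Probability"
begin

definition pw :: "real \<Rightarrow> real \<Rightarrow> real" where
  "pw x a = (if a = 0 then 1 else x powr a)"

definition KL :: "real \<Rightarrow> real \<Rightarrow> real" where
  "KL t \<phi> = t * ln (t / \<phi>) + (1 - t) * ln ((1 - t) / (1 - \<phi>))"

(* n*t is assumed to be an integer; nat \<lfloor>n*t\<rfloor> is then exactly n*t *)
definition P_X :: "nat \<Rightarrow> real \<Rightarrow> real \<Rightarrow> real" where
  "P_X n t \<phi> = (\<Sum>k\<in>{k. k \<le> n \<and> real k \<ge> real n * t}.
       real (n choose k) * \<phi> ^ k * (1 - \<phi>) ^ (n - k))"

definition P_CH :: "nat \<Rightarrow> real \<Rightarrow> real \<Rightarrow> real" where
  "P_CH n t \<phi> = (if t \<ge> \<phi> then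
       pw (\<phi> / t) (real n * t) * pw ((1 - \<phi>) / (1 - t)) (real n * (1 - t))
     else 1)"

definition P_PBR :: "nat \<Rightarrow> real \<Rightarrow> real \<Rightarrow> real" where
  "P_PBR n t \<phi> = (if t \<ge> \<phi> then
       pw \<phi> (real n * t) * pw (1 - \<phi>) (real n * (1 - t)) * (real n + 1)
         * real (n choose nat \<lfloor>real n * t\<rfloor>)
     else
       pw t (real n * t) * pw (1 - t) (real n * (1 - t)) * (real n + 1)
         * real (n choose nat \<lfloor>real n * t\<rfloor>))"

end

theory Submission imports Defs "HOL-Real_Asymp.Real_Asymp" begin
lemma choose_step: "j < n \<Longrightarrow> (n choose Suc j) * Suc j = (n choose j) * (n - j)"
  by (metis binomial_absorb_comp binomial_absorption mult.commute)

definition bt :: "nat \<Rightarrow> real \<Rightarrow> nat \<Rightarrow> real" where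
  "bt n p j = real (n choose j) * p ^ j * (1 - p) ^ (n - j)"

lemma bt_nonneg: "0 \<le> p \<Longrightarrow> p \<le> 1 \<Longrightarrow> 0 \<le> bt n p j"
  unfolding bt_def by simp

lemma bt_sum: "(\<Sum>j\<le>n. bt n p j) = 1"
proof -
  have "(p + (1 - p)) ^ n = (\<Sum>j\<le>n. real (n choose j) * p ^ j * (1 - p) ^ (n - j))"
    by (rule binomial_ring)
  then show ?thesis by (simp add: bt_def)
qed

lemma bt_step:
  assumes "j < n"
  shows "bt n p (Suc j) * (real (Suc j) * (1 - p)) = bt n p j * (real (n - j) * p)"
proof -
  have c: "real (n choose Suc j) * real (Suc j) = real (n choose j) * real (n - j)"
    using choose_step[OF assms] by (metis of_nat_mult)
  have e: "n - j = Suc (n - Suc j)" using assms by simp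
  have "bt n p (Suc j) * (real (Suc j) * (1 - p))
        = (real (n choose Suc j) * real (Suc j)) * (p ^ j * p) * (1 - p) ^ (n - Suc j) * (1 - p)"
    by (simp add: bt_def algebra_simps)
  also have "\<dots> = (real (n choose j) * real (n - j)) * (p ^ j * p) * ((1 - p) ^ (n - Suc j) * (1 - p))"
    by (simp only: c)
  also have "\<dots> = bt n p j * (real (n - j) * p)"
    by (simp add: bt_def e algebra_simps)
  finally show ?thesis .
qed

lemma bt_dec:
  assumes p: "0 \<le> p" "p \<le> 1" and k: "real n * p \<le> real k" and kj: "k \<le> j" and jn: "j \<le> n"
  shows "bt n p j \<le> bt n p k"
  using kj jn
proof (induction j rule: dec_induct)
  case base then show ?case by simp
next
  case (step j)
  show ?case
  proof (cases "p = 1")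
    case True
    then have "k = n" using k step by (simp) 
    then show ?thesis using step by simp
  next
    case False
    have jn: "j < n" using step by simp
    have "real n * p \<le> real j" using k step by simp
    then have ineq: "real (n - j) * p \<le> real (Suc j) * (1 - p)"
      using jn p by (simp add: of_nat_diff algebra_simps)
    have pos: "real (Suc j) * (1 - p) > 0" using False p by simp
    have "bt n p (Suc j) * (real (Suc j) * (1 - p)) = bt n p j * (real (n - j) * p)"
      by (rule bt_step[OF jn])
    also have "\<dots> \<le> bt n p j * (real (Suc j) * (1 - p))"
      by (intro mult_left_mono ineq bt_nonneg p)
    finally have "bt n p (Suc j) \<le> bt n p j" using pos by (rule mult_right_le_imp_le)
    then show ?thesis using step by simp
  qed
qed

lemma bt_inc:
  assumes p: "0 \<le> p" "p \<le> 1" and k: "real k \<le> real n * p" and kj: "j \<le> k" and kn: "k \<le> n"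
  shows "bt n p j \<le> bt n p k"
  using kj
proof (induction j rule: inc_induct)
  case base then show ?case by simp
next
  case (step m)
  have mn: "m < n" using step kn by simp
  have "real (Suc m) \<le> real n * p" using k step kn by simp
  then have ineq: "real (Suc m) * (1 - p) \<le> real (n - m) * p"
    using mn p by (simp add: of_nat_diff algebra_simps)
  have ppos: "p > 0" using k step p by (cases "p = 0") auto
  have pos: "real (n - m) * p > 0" using mn ppos by simp
  have "bt n p m * (real (n - m) * p) = bt n p (Suc m) * (real (Suc m) * (1 - p))"
    by (rule bt_step[OF mn, symmetric])
  also have "\<dots> \<le> bt n p (Suc m) * (real (n - m) * p)"
    by (intro mult_left_mono ineq bt_nonneg p)
  finally have "bt n p m \<le> bt n p (Suc m)" using pos by (rule mult_right_le_imp_le)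
  then show ?case using step by simp
qed

lemma bt_mode:
  assumes "k \<le> n" "n > 0" "j \<le> n"
  shows "bt n (real k / real n) j \<le> bt n (real k / real n) k"
proof -
  let ?p = "real k / real n"
  have p: "0 \<le> ?p" "?p \<le> 1" using assms by auto
  have e: "real n * ?p = real k" using assms by simp
  show ?thesis
  proof (cases "k \<le> j")
    case True then show ?thesis using bt_dec[OF p _ True assms(3)] e by simp
  next
    case False then show ?thesis using bt_inc[of ?p k n j] p e assms by simp
  qed
qed

lemma bt_mode_bounds:
  assumes "k \<le> n" "n > 0"
  shows "1 / (real n + 1) \<le> bt n (real k / real n) k" "bt n (real k / real n) k \<le> 1"
proof -
  let ?p = "real k / real n"
  have p: "0 \<le> ?p" "?p \<le> 1" using assms by auto
  have "1 = (\<Sum>j\<le>n. bt n ?p j)" by (simp add: bt_sum)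
  also have "\<dots> \<le> (\<Sum>j\<le>n. bt n ?p k)" by (intro sum_mono bt_mode assms) auto
  also have "\<dots> = (real n + 1) * bt n ?p k" by simp
  finally show "1 / (real n + 1) \<le> bt n ?p k" by (simp add: field_simps)
  have "bt n ?p k \<le> (\<Sum>j\<le>n. bt n ?p j)"
    by (rule member_le_sum) (use assms bt_nonneg[OF p] in auto)
  then show "bt n ?p k \<le> 1" by (simp add: bt_sum)
qed

lemma ln_lower: "0 < x \<Longrightarrow> 1 - 1/x \<le> ln (x::real)"
  by (smt (verit, ccfv_SIG) divide_le_0_1_iff ln_divide_pos ln_ge_zero_iff ln_le_minus_one)

lemma ulnu_bound:
  fixes u v :: real
  assumes "0 \<le> u" "0 < v"
  shows "0 \<le> u * ln u - v * ln v - (ln v + 1) * (u - v)"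
    and "u * ln u - v * ln v - (ln v + 1) * (u - v) \<le> (u - v)\<^sup>2 / v"
proof -
  have "0 \<le> u * ln u - v * ln v - (ln v + 1) * (u - v) \<and>
        u * ln u - v * ln v - (ln v + 1) * (u - v) \<le> (u - v)\<^sup>2 / v"
  proof (cases "u = 0")
    case True
    then show ?thesis using assms by (simp add: power2_eq_square algebra_simps)
  next
    case False
    then have u: "u > 0" using assms by simp
    have e: "u * ln u - v * ln v - (ln v + 1) * (u - v) = u * ln (u / v) - (u - v)"
      using u assms by (simp add: ln_div algebra_simps)
    have l1: "ln (u / v) \<le> u / v - 1" using u assms by (intro ln_le_minus_one) simp
    have l2: "1 - v / u \<le> ln (u / v)" using ln_lower[of "u/v"] u assms by simp
    have "u * ln (u / v) \<le> u * (u / v - 1)" using l1 u by (intro mult_left_mono) auto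
    moreover have "u * (u / v - 1) - (u - v) = (u - v)\<^sup>2 / v"
      using assms by (simp add: field_simps power2_eq_square)
    moreover have "u * (1 - v / u) \<le> u * ln (u / v)" using l2 u by (intro mult_left_mono) auto
    moreover have "u * (1 - v / u) = u - v" using u by (simp add: field_simps)
    ultimately show ?thesis using e by linarith
  qed
  then show "0 \<le> u * ln u - v * ln v - (ln v + 1) * (u - v)"
    and "u * ln u - v * ln v - (ln v + 1) * (u - v) \<le> (u - v)\<^sup>2 / v" by auto
qed

lemma KL_decomp:
  assumes "0 \<le> t" "t \<le> 1" "0 < \<phi>" "\<phi> < 1"
  shows "KL t \<phi> = t * ln t + (1 - t) * ln (1 - t) - t * ln \<phi> - (1 - t) * ln (1 - \<phi>)"
proof -
  have a: "t * ln (t / \<phi>) = t * ln t - t * ln \<phi>"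
    using assms by (cases "t = 0") (auto simp: ln_div algebra_simps)
  have b: "(1 - t) * ln ((1 - t) / (1 - \<phi>)) = (1 - t) * ln (1 - t) - (1 - t) * ln (1 - \<phi>)"
    using assms by (cases "t = 1") (auto simp: ln_div algebra_simps)
  show ?thesis unfolding KL_def a b by simp
qed

lemma KL_taylor:
  assumes t: "0 \<le> t" "t \<le> 1" and ph: "0 < \<phi>" "\<phi> < 1" and th: "0 < \<theta>" "\<theta> < 1"
  shows "\<bar>KL t \<phi> - KL \<theta> \<phi> - ln (\<theta> / (1 - \<theta>) * ((1 - \<phi>) / \<phi>)) * (t - \<theta>)\<bar>
           \<le> (t - \<theta>)\<^sup>2 * (1 / \<theta> + 1 / (1 - \<theta>))"
proof -
  have c: "ln (\<theta> / (1 - \<theta>) * ((1 - \<phi>) / \<phi>)) = ln \<theta> - ln (1 - \<theta>) + ln (1 - \<phi>) - ln \<phi>"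
    using ph th by (simp add: ln_mult ln_div)
  have A1: "0 \<le> t * ln t - \<theta> * ln \<theta> - (ln \<theta> + 1) * (t - \<theta>)"
   and A2: "t * ln t - \<theta> * ln \<theta> - (ln \<theta> + 1) * (t - \<theta>) \<le> (t - \<theta>)\<^sup>2 / \<theta>"
    using ulnu_bound[of t \<theta>] t th by auto
  have B1: "0 \<le> (1-t) * ln (1-t) - (1-\<theta>) * ln (1-\<theta>) - (ln (1-\<theta>) + 1) * ((1-t) - (1-\<theta>))"
   and B2: "(1-t) * ln (1-t) - (1-\<theta>) * ln (1-\<theta>) - (ln (1-\<theta>) + 1) * ((1-t) - (1-\<theta>)) \<le> ((1-t) - (1-\<theta>))\<^sup>2 / (1-\<theta>)"
    using ulnu_bound[of "1-t" "1-\<theta>"] t th by auto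
  have kth: "KL \<theta> \<phi> = \<theta> * ln \<theta> + (1 - \<theta>) * ln (1 - \<theta>) - \<theta> * ln \<phi> - (1 - \<theta>) * ln (1 - \<phi>)"
    using th ph by (intro KL_decomp) auto
  have sq: "((1-t) - (1-\<theta>))\<^sup>2 = (t - \<theta>)\<^sup>2" by (simp add: power2_eq_square algebra_simps)
  have e: "KL t \<phi> - KL \<theta> \<phi> - ln (\<theta> / (1 - \<theta>) * ((1 - \<phi>) / \<phi>)) * (t - \<theta>)
     = (t * ln t - \<theta> * ln \<theta> - (ln \<theta> + 1) * (t - \<theta>))
     + ((1-t) * ln (1-t) - (1-\<theta>) * ln (1-\<theta>) - (ln (1-\<theta>) + 1) * ((1-t) - (1-\<theta>)))"
    unfolding c KL_decomp[OF t ph] kth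
    by (simp add: algebra_simps)
  have "(t - \<theta>)\<^sup>2 / \<theta> + (t - \<theta>)\<^sup>2 / (1 - \<theta>) = (t - \<theta>)\<^sup>2 * (1 / \<theta> + 1 / (1 - \<theta>))"
    by (simp add: algebra_simps)
  then show ?thesis unfolding e using A1 A2 B1 B2 sq by (smt (verit))
qed


lemma pw_nat: "0 \<le> x \<Longrightarrow> pw x (real m) = x ^ m"
  unfolding pw_def by (cases "x = 0") (auto simp: powr_realpow)

lemma ln_bt:
  assumes "0 < p" "p < 1 \<or> k = n" "k \<le> n"
  shows "ln (bt n p k) = ln (real (n choose k)) + real k * ln p + real (n - k) * ln (1 - p)"
proof (cases "k = n")
  case True
  then show ?thesis using assms by (simp add: bt_def ln_mult ln_realpow)
next
  case False
  then have "p < 1" using assms by auto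
  then show ?thesis using assms by (simp add: bt_def ln_mult ln_realpow)
qed

lemma bt_pos: "0 < p \<Longrightarrow> p < 1 \<or> k = n \<Longrightarrow> k \<le> n \<Longrightarrow> 0 < bt n p k"
  unfolding bt_def by (cases "k = n") auto

context
  fixes n k :: nat and \<phi> t :: real
  assumes n: "n > 0" and kn: "k \<le> n" and ph: "0 < \<phi>" "\<phi> < 1"
    and tdef: "t = real k / real n" and pt: "\<phi> \<le> t"
begin

lemma nt: "real n * t = real k" using n tdef by simp
lemma n1t: "real n * (1 - t) = real (n - k)" using n kn tdef by (simp add: of_nat_diff algebra_simps)
lemma tpos: "0 < t" using ph pt by simp
lemma tle1: "t \<le> 1" using n kn tdef by simp
lemma tlt1: "t < 1 \<or> k = n" using n kn tdef by (cases "k = n") auto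

lemma nKL: "real n * KL t \<phi> = ln (bt n t k) - ln (bt n \<phi> k)"
proof -
  have "real n * KL t \<phi> = (real n * t) * ln t + (real n * (1 - t)) * ln (1 - t)
      - (real n * t) * ln \<phi> - (real n * (1 - t)) * ln (1 - \<phi>)"
    unfolding KL_decomp[of t \<phi>, OF less_imp_le[OF tpos] tle1 ph] by (simp add: algebra_simps)
  also have "\<dots> = real k * ln t + real (n - k) * ln (1 - t) - real k * ln \<phi> - real (n - k) * ln (1 - \<phi>)"
    unfolding nt n1t ..
  finally show ?thesis
    using ln_bt[of t k n] ln_bt[of \<phi> k n] tpos tlt1 ph kn by simp
qed

lemma CH_eq: "- ln (P_CH n t \<phi>) - real n * KL t \<phi> = 0"
proof -
  have P: "P_CH n t \<phi> = (\<phi> / t) ^ k * ((1 - \<phi>) / (1 - t)) ^ (n - k)"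
  proof -
    have "P_CH n t \<phi> = pw (\<phi> / t) (real k) * pw ((1 - \<phi>) / (1 - t)) (real (n - k))"
      unfolding P_CH_def using pt by (simp only: nt n1t if_True)
    also have "\<dots> = (\<phi> / t) ^ k * ((1 - \<phi>) / (1 - t)) ^ (n - k)"
      using ph tle1 tpos by (simp add: pw_nat)
    finally show ?thesis .
  qed
  have a: "(\<phi> / t) ^ k * t ^ k = \<phi> ^ k"
  proof -
    have "(\<phi> / t) ^ k * t ^ k = (\<phi> / t * t) ^ k" by (rule power_mult_distrib[symmetric])
    also have "\<phi> / t * t = \<phi>" using tpos by simp
    finally show ?thesis .
  qed
  have b: "((1 - \<phi>) / (1 - t)) ^ (n - k) * (1 - t) ^ (n - k) = (1 - \<phi>) ^ (n - k)"
  proof (cases "k = n")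
    case False then have "t < 1" using tlt1 by auto
    have "((1 - \<phi>) / (1 - t)) ^ (n - k) * (1 - t) ^ (n - k) = ((1 - \<phi>) / (1 - t) * (1 - t)) ^ (n - k)"
      by (rule power_mult_distrib[symmetric])
    also have "(1 - \<phi>) / (1 - t) * (1 - t) = 1 - \<phi>" using \<open>t < 1\<close> by simp
    finally show ?thesis .
  qed simp
  have e: "P_CH n t \<phi> * bt n t k = bt n \<phi> k"
  proof -
    have "P_CH n t \<phi> * bt n t k = real (n choose k) * (((\<phi> / t) ^ k * t ^ k) *
        (((1 - \<phi>) / (1 - t)) ^ (n - k) * (1 - t) ^ (n - k)))"
      unfolding P bt_def by (simp only: ac_simps)
    also have "\<dots> = bt n \<phi> k" unfolding a b bt_def by (simp only: ac_simps)
    finally show ?thesis .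
  qed
  have p1: "bt n t k > 0" using bt_pos tpos tlt1 kn by blast
  have p2: "P_CH n t \<phi> > 0"
  proof -
    have "(\<phi> / t) ^ k > 0" using ph tpos by simp
    moreover have "((1 - \<phi>) / (1 - t)) ^ (n - k) > 0"
    proof (cases "k = n")
      case False then have "t < 1" using tlt1 by auto
      then show ?thesis using ph by simp
    qed simp
    ultimately show ?thesis unfolding P by simp
  qed
  have "ln (bt n \<phi> k) = ln (P_CH n t \<phi> * bt n t k)" by (simp only: e)
  also have "\<dots> = ln (P_CH n t \<phi>) + ln (bt n t k)" using p1 p2 by (simp add: ln_mult)
  finally show ?thesis using nKL by simp
qed

lemma Lbounds: "- ln (real n + 1) \<le> ln (bt n t k)" "ln (bt n t k) \<le> 0"
proof -
  have b: "1 / (real n + 1) \<le> bt n t k" "bt n t k \<le> 1"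
    unfolding tdef by (rule bt_mode_bounds[OF kn n])+
  have p: "0 < 1 / (real n + 1)" by simp
  have "ln (1 / (real n + 1)) \<le> ln (bt n t k)" by (rule ln_mono[OF b(1) p])
  moreover have "ln (1 / (real n + 1)) = - ln (real n + 1)" by (subst ln_div) auto
  ultimately show "- ln (real n + 1) \<le> ln (bt n t k)" by simp
  have "0 < bt n t k" using b p by linarith
  then show "ln (bt n t k) \<le> 0" using b by simp
qed

lemma PBR_eq: "P_PBR n t \<phi> = bt n \<phi> k * (real n + 1)"
proof -
  have "nat \<lfloor>real n * t\<rfloor> = k" unfolding nt by simp
  then show ?thesis unfolding P_PBR_def bt_def using pt nt n1t ph by (simp add: pw_nat)
qed

lemma PBR_bound: "\<bar>- ln (P_PBR n t \<phi>) - real n * KL t \<phi>\<bar> \<le> 2 * ln (real n + 1)"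
proof -
  have bp: "bt n \<phi> k > 0" using bt_pos ph kn by blast
  have "- ln (P_PBR n t \<phi>) = - ln (bt n \<phi> k) - ln (real n + 1)"
    unfolding PBR_eq using bp by (simp add: ln_mult)
  moreover have "0 \<le> ln (real n + 1)" by simp
  ultimately show ?thesis unfolding nKL abs_le_iff using Lbounds by linarith
qed

lemma X_eq: "P_X n t \<phi> = (\<Sum>j\<in>{k..n}. bt n \<phi> j)"
proof -
  have e: "{j. j \<le> n \<and> real n * t \<le> real j} = {k..n}" unfolding nt of_nat_le_iff by auto
  show ?thesis unfolding P_X_def bt_def e ..
qed

lemma X_bound: "\<bar>- ln (P_X n t \<phi>) - real n * KL t \<phi>\<bar> \<le> 2 * ln (real n + 1)"
proof -
  have bp: "bt n \<phi> k > 0" using bt_pos ph kn by blast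
  have lo: "bt n \<phi> k \<le> P_X n t \<phi>"
    unfolding X_eq by (rule member_le_sum) (use kn ph bt_nonneg in auto)
  have "P_X n t \<phi> \<le> (\<Sum>j\<in>{k..n}. bt n \<phi> k)"
    unfolding X_eq
  proof (rule sum_mono)
    fix j assume j: "j \<in> {k..n}"
    have "real n * \<phi> \<le> real k" using mult_left_mono[OF pt, of "real n"] nt by simp
    then show "bt n \<phi> j \<le> bt n \<phi> k" using bt_dec[of \<phi> n k j] ph j by auto
  qed
  also have "\<dots> \<le> (real n + 1) * bt n \<phi> k" using kn bp by simp
  finally have hi: "P_X n t \<phi> \<le> (real n + 1) * bt n \<phi> k" .
  have "ln (bt n \<phi> k) \<le> ln (P_X n t \<phi>)" using lo bp by (intro ln_mono) auto
  moreover have "ln (P_X n t \<phi>) \<le> ln ((real n + 1) * bt n \<phi> k)" using hi lo bp by (intro ln_mono) auto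
  moreover have "ln ((real n + 1) * bt n \<phi> k) = ln (real n + 1) + ln (bt n \<phi> k)"
    using bp by (simp add: ln_mult)
  moreover have "0 \<le> ln (real n + 1)" by simp
  ultimately show ?thesis unfolding nKL abs_le_iff using Lbounds by linarith
qed

lemma all_bound:
  assumes "P \<in> {P_CH, P_PBR, P_X}"
  shows "\<bar>- ln (P n t \<phi>) - real n * KL t \<phi>\<bar> \<le> 2 * ln (real n + 1)"
proof -
  have l: "0 \<le> ln (real n + 1)" by simp
  from assms consider "P = P_CH" | "P = P_PBR" | "P = P_X" by blast
  then show ?thesis
  proof cases
    case 1 then show ?thesis using CH_eq l by simp
  next
    case 2 then show ?thesis using PBR_bound by simp
  next
    case 3 then show ?thesis using X_bound by simp
  qed
qed

end

lemma std_normal_singleton: "measure std_normal_distribution {x} = 0"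
proof -
  have ae: "AE y in lborel. y \<in> {x} \<longrightarrow> ennreal (std_normal_density y) = 0"
    using AE_lborel_singleton[of x] by (rule eventually_mono) auto
  have "{x} \<in> null_sets std_normal_distribution"
    by (subst null_sets_density_iff) (use ae in auto)
  then show ?thesis by (simp add: measure_def null_setsD1)
qed

lemma isCont_Phi: "isCont (cdf std_normal_distribution) x"
proof -
  interpret real_distribution std_normal_distribution by (rule real_dist_normal_dist)
  show ?thesis by (simp add: isCont_cdf std_normal_singleton)
qed

lemma cdf_normal_scaled:
  assumes a: "a > 0"
  shows "cdf (density lborel (normal_density 0 a)) x = cdf std_normal_distribution (x / a)"
proof -
  interpret S: prob_space std_normal_distribution using real_dist_normal_dist real_distribution_def by blast
  have sets: "sets std_normal_distribution = sets lborel" by simp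
  have d0: "distributed std_normal_distribution lborel (\<lambda>x. x) std_normal_density"
    unfolding distributed_def using sets
    by (auto simp: distr_id2)
  have "distributed std_normal_distribution lborel (\<lambda>y. 0 + a * y) (normal_density (0 + a * 0) (\<bar>a\<bar> * 1))"
    by (rule S.normal_density_affine[OF d0]) (use a in auto)
  then have d: "distr std_normal_distribution lborel (\<lambda>y. a * y) = density lborel (normal_density 0 a)"
    unfolding distributed_def using a by simp
  have meas: "(\<lambda>y. a * y) \<in> measurable std_normal_distribution lborel"
    by (subst measurable_cong_sets[OF sets refl]) simp
  have "cdf (density lborel (normal_density 0 a)) x = measure (distr std_normal_distribution lborel (\<lambda>y. a * y)) {..x}"
    unfolding cdf_def d ..
  also have "\<dots> = measure std_normal_distribution ((\<lambda>y. a * y) -` {..x} \<inter> space std_normal_distribution)"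
    by (rule measure_distr) (use meas in auto)
  also have "(\<lambda>y. a * y) -` {..x} \<inter> space std_normal_distribution = {..x / a}"
    using a sets_eq_imp_space_eq[OF sets] by (auto simp: field_simps)
  finally show ?thesis unfolding cdf_def .
qed

lemma slutsky:
  assumes PS: "prob_space M" and a: "a > 0"
    and Zm: "\<And>n. Z n \<in> borel_measurable M" and Tm: "\<And>n. T n \<in> borel_measurable M"
    and conv: "weak_conv_m (\<lambda>n. distr M borel (Z n)) std_normal_distribution"
    and small: "\<And>\<epsilon>. \<epsilon> > 0 \<Longrightarrow> (\<lambda>n. measure M {x\<in>space M. \<epsilon> < \<bar>T n x - a * Z n x\<bar>}) \<longlonglongrightarrow> 0"
  shows "weak_conv_m (\<lambda>n. distr M borel (T n)) (density lborel (normal_density 0 a))"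
proof -
  interpret prob_space M by (rule PS)
  let ?Phi = "cdf std_normal_distribution"
  define F where "F n y = measure M {x\<in>space M. Z n x \<le> y}" for n y
  define H where "H n y = measure M {x\<in>space M. T n x \<le> y}" for n y
  define p where "p e n = measure M {x\<in>space M. e < \<bar>T n x - a * Z n x\<bar>}" for e n
  have cdfZ: "cdf (distr M borel (Z n)) y = F n y" for n y
  proof -
    have "cdf (distr M borel (Z n)) y = measure M (Z n -` {..y} \<inter> space M)"
      unfolding cdf_def by (rule measure_distr) (use Zm in auto)
    also have "Z n -` {..y} \<inter> space M = {x\<in>space M. Z n x \<le> y}" by auto
    finally show ?thesis unfolding F_def .
  qed
  have cdfT: "cdf (distr M borel (T n)) y = H n y" for n y
  proof -
    have "cdf (distr M borel (T n)) y = measure M (T n -` {..y} \<inter> space M)"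
      unfolding cdf_def by (rule measure_distr) (use Tm in auto)
    also have "T n -` {..y} \<inter> space M = {x\<in>space M. T n x \<le> y}" by auto
    finally show ?thesis unfolding H_def .
  qed
  have Fconv: "(\<lambda>n. F n y) \<longlonglongrightarrow> ?Phi y" for y
    using conv isCont_Phi[of y] unfolding weak_conv_m_def weak_conv_def cdfZ by blast
  have pconv: "e > 0 \<Longrightarrow> (\<lambda>n. p e n) \<longlonglongrightarrow> 0" for e unfolding p_def by (rule small)
  have Zev[measurable]: "{x\<in>space M. Z n x \<le> y} \<in> events" for n y using Zm[of n] by measurable
  have Tev[measurable]: "{x\<in>space M. T n x \<le> y} \<in> events" for n y using Tm[of n] by measurable
  have Pev[measurable]: "{x\<in>space M. e < \<bar>T n x - a * Z n x\<bar>} \<in> events" for n e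
    using Tm[of n] Zm[of n] by measurable
  have upper: "H n x \<le> F n (x / a + d) + p (a * d) n" if "d > 0" for n x d
  proof -
    have "{x'\<in>space M. T n x' \<le> x} \<subseteq> {x'\<in>space M. Z n x' \<le> x / a + d} \<union> {x'\<in>space M. a * d < \<bar>T n x' - a * Z n x'\<bar>}"
    proof safe
      fix y assume y: "y \<in> space M" "T n y \<le> x" "\<not> a * d < \<bar>T n y - a * Z n y\<bar>"
      then have "a * Z n y \<le> x + a * d" by linarith
      then have "Z n y \<le> (x + a * d) / a" using a by (simp add: field_simps)
      also have "(x + a * d) / a = x / a + d" using a by (simp add: field_simps)
      finally show "Z n y \<le> x / a + d" .
    qed
    then have "H n x \<le> measure M ({x'\<in>space M. Z n x' \<le> x / a + d} \<union> {x'\<in>space M. a * d < \<bar>T n x' - a * Z n x'\<bar>})"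
      unfolding H_def by (intro finite_measure_mono) auto
    also have "\<dots> \<le> F n (x / a + d) + p (a * d) n"
      unfolding F_def p_def by (intro measure_Un_le) auto
    finally show ?thesis .
  qed
  have lower: "F n (x / a - d) \<le> H n x + p (a * d) n" if "d > 0" for n x d
  proof -
    have "{x'\<in>space M. Z n x' \<le> x / a - d} \<subseteq> {x'\<in>space M. T n x' \<le> x} \<union> {x'\<in>space M. a * d < \<bar>T n x' - a * Z n x'\<bar>}"
    proof safe
      fix y assume y: "y \<in> space M" "Z n y \<le> x / a - d" "\<not> a * d < \<bar>T n y - a * Z n y\<bar>"
      have "a * Z n y \<le> a * (x / a - d)" using y a by (intro mult_left_mono) auto
      also have "a * (x / a - d) = x - a * d" using a by (simp add: field_simps)
      finally show "T n y \<le> x" using y by linarith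
    qed
    then have "F n (x / a - d) \<le> measure M ({x'\<in>space M. T n x' \<le> x} \<union> {x'\<in>space M. a * d < \<bar>T n x' - a * Z n x'\<bar>})"
      unfolding F_def by (intro finite_measure_mono) auto
    also have "\<dots> \<le> H n x + p (a * d) n"
      unfolding H_def p_def by (intro measure_Un_le) auto
    finally show ?thesis .
  qed
  have main: "(\<lambda>n. H n x) \<longlonglongrightarrow> ?Phi (x / a)" for x
  proof (rule LIMSEQ_I)
    fix r :: real assume r: "r > 0"
    have "?Phi \<midarrow>(x / a)\<rightarrow> ?Phi (x / a)" using isCont_Phi unfolding isCont_def by blast
    then obtain s where s: "s > 0" "\<And>y. y \<noteq> x / a \<Longrightarrow> norm (y - x / a) < s \<Longrightarrow> norm (?Phi y - ?Phi (x / a)) < r / 2"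
      unfolding LIM_eq using r by (meson half_gt_zero)
    define d where "d = s / 2"
    have d: "d > 0" "d < s" using s by (auto simp: d_def)
    have c1: "\<bar>?Phi (x / a + d) - ?Phi (x / a)\<bar> < r / 2" using s(2)[of "x / a + d"] d by simp
    have c2: "\<bar>?Phi (x / a - d) - ?Phi (x / a)\<bar> < r / 2" using s(2)[of "x / a - d"] d by simp
    have ad: "a * d > 0" using a d by simp
    have e1: "\<forall>\<^sub>F n in sequentially. \<bar>F n (x / a + d) - ?Phi (x / a + d)\<bar> < r / 4"
      using Fconv[of "x / a + d", THEN tendstoD, of "r / 4"] r by (simp add: dist_real_def)
    have e2: "\<forall>\<^sub>F n in sequentially. \<bar>F n (x / a - d) - ?Phi (x / a - d)\<bar> < r / 4"
      using Fconv[of "x / a - d", THEN tendstoD, of "r / 4"] r by (simp add: dist_real_def)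
    have e3: "\<forall>\<^sub>F n in sequentially. \<bar>p (a * d) n\<bar> < r / 4"
      using pconv[OF ad, THEN tendstoD, of "r / 4"] r by (simp add: dist_real_def)
    have "\<forall>\<^sub>F n in sequentially. \<bar>H n x - ?Phi (x / a)\<bar> < r"
      using e1 e2 e3
    proof eventually_elim
      case (elim n)
      have u: "H n x \<le> F n (x / a + d) + p (a * d) n" by (rule upper[OF d(1)])
      have l: "F n (x / a - d) \<le> H n x + p (a * d) n" by (rule lower[OF d(1)])
      show ?case using u l elim c1 c2 by linarith
    qed
    then obtain N where "\<And>n. n \<ge> N \<Longrightarrow> \<bar>H n x - ?Phi (x / a)\<bar> < r"
      unfolding eventually_sequentially by blast
    then show "\<exists>N. \<forall>n\<ge>N. norm (H n x - ?Phi (x / a)) < r" by auto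
  qed
  show ?thesis
    unfolding weak_conv_m_def weak_conv_def cdfT cdf_normal_scaled[OF a] using main by blast
qed


lemma (in prob_space) indep_sets_reindex:
  assumes "indep_sets F (f ` I)" "inj_on f I"
  shows "indep_sets (\<lambda>i. F (f i)) I"
proof (rule indep_setsI)
  fix i assume "i \<in> I" then show "F (f i) \<subseteq> events"
    using assms(1) unfolding indep_sets_def by auto
next
  fix A J assume J: "J \<noteq> {}" "J \<subseteq> I" "finite J" and A: "\<forall>j\<in>J. A j \<in> F (f j)"
  define A' where "A' y = A (the_inv_into J f y)" for y
  have inj: "inj_on f J" using assms(2) J(2) by (rule inj_on_subset)
  have A'f: "A' (f j) = A j" if "j \<in> J" for j
    unfolding A'_def using the_inv_into_f_f[OF inj that] by simp
  have "prob (\<Inter>y\<in>f ` J. A' y) = (\<Prod>y\<in>f ` J. prob (A' y))"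
    by (rule indep_setsD[OF assms(1)]) (use J A A'f in auto)
  moreover have "(\<Inter>y\<in>f ` J. A' y) = (\<Inter>j\<in>J. A j)" using A'f by auto
  moreover have "(\<Prod>y\<in>f ` J. prob (A' y)) = (\<Prod>j\<in>J. prob (A j))"
    by (subst prod.reindex[OF inj]) (simp add: A'f)
  ultimately show "prob (\<Inter>j\<in>J. A j) = (\<Prod>j\<in>J. prob (A j))" by simp
qed

lemma (in prob_space) indep_vars_reindex:
  assumes "indep_vars M' X (f ` I)" "inj_on f I"
  shows "indep_vars (\<lambda>i. M' (f i)) (\<lambda>i. X (f i)) I"
  using assms unfolding indep_vars_def
  by (auto intro: indep_sets_reindex[where F="\<lambda>i. sigma_sets (space M) {X i -` A \<inter> space M |A. A \<in> sets (M' i)}", simplified])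

lemma measurable_finite_range:
  fixes f :: "'a \<Rightarrow> real" and g :: "real \<Rightarrow> real"
  assumes f: "f \<in> borel_measurable M" and V: "finite V" and range: "\<And>x. x \<in> space M \<Longrightarrow> f x \<in> V"
  shows "(\<lambda>x. g (f x)) \<in> borel_measurable M"
proof -
  have "(\<lambda>x. \<Sum>v\<in>V. if f x = v then g v else 0) \<in> borel_measurable M"
    using f by measurable
  moreover have "(\<Sum>v\<in>V. if f x = v then g v else 0) = g (f x)" if "x \<in> space M" for x
    using range[OF that] V by (simp add: sum.delta')
  ultimately show ?thesis by (rule measurable_cong[THEN iffD1, rotated]) auto
qed

context prob_space
begin

context
  fixes B :: "nat \<Rightarrow> 'a \<Rightarrow> bool" and \<theta> :: real
  assumes th: "0 < \<theta>" "\<theta> < 1"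
    and ind: "indep_vars (\<lambda>_. count_space UNIV) B UNIV"
    and dB: "\<And>i. distr M (count_space UNIV) (B i) = measure_pmf (bernoulli_pmf \<theta>)"
begin

lemma Bm[measurable]: "B i \<in> measurable M (count_space UNIV)"
  using ind unfolding indep_vars_def2 by auto

lemma expB: "expectation (\<lambda>x. h (B i x)) = \<theta> * h True + (1 - \<theta>) * h False"
proof -
  have "expectation (\<lambda>x. h (B i x)) = integral\<^sup>L (distr M (count_space UNIV) (B i)) h"
    by (rule integral_distr[symmetric]) auto
  also have "\<dots> = (\<integral>b. h b \<partial>measure_pmf (bernoulli_pmf \<theta>))" by (simp only: dB)
  also have "\<dots> = (\<Sum>b\<in>UNIV. h b * pmf (bernoulli_pmf \<theta>) b)"
    by (rule integral_measure_pmf_real) auto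
  also have "\<dots> = \<theta> * h True + (1 - \<theta>) * h False"
    using th by (simp add: UNIV_bool)
  finally show ?thesis .
qed

lemma indX: "indep_vars (\<lambda>i. borel) (\<lambda>i x. of_bool (B (Suc i) x) :: real) UNIV"
proof -
  have "indep_vars (\<lambda>_. count_space UNIV) B (Suc ` UNIV)"
    using ind by (rule indep_vars_subset) auto
  then have "indep_vars (\<lambda>i. count_space UNIV) (\<lambda>i. B (Suc i)) UNIV"
    using indep_vars_reindex[of "\<lambda>_. count_space UNIV" B Suc UNIV] by simp
  then show ?thesis by (rule indep_vars_compose2) auto
qed

lemma distrX: "distr M borel (\<lambda>x. of_bool (B (Suc n) x) :: real)
    = distr (measure_pmf (bernoulli_pmf \<theta>)) borel (\<lambda>b. of_bool b)"
proof -
  have "distr (distr M (count_space UNIV) (B (Suc n))) borel (\<lambda>b. of_bool b :: real)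
      = distr M borel ((\<lambda>b. of_bool b :: real) \<circ> B (Suc n))"
    by (rule distr_distr) auto
  then show ?thesis by (simp add: dB comp_def)
qed

lemma CLT:
  "weak_conv_m (\<lambda>n. distr M borel (\<lambda>x. (\<Sum>i<n. of_bool (B (Suc i) x) - \<theta>) / sqrt (real n * (sqrt (\<theta> * (1 - \<theta>)))\<^sup>2)))
     std_normal_distribution"
proof -
  let ?X = "\<lambda>i x. of_bool (B (Suc i) x) :: real"
  have rv: "?X i \<in> borel_measurable M" for i by measurable
  have ex: "expectation (?X n) = \<theta>" for n using expB[of "\<lambda>b. of_bool b"] by simp
  have sq: "integrable M (\<lambda>x. (?X n x)\<^sup>2)" for n
    by (rule integrable_const_bound[where B=1]) auto
  have var: "variance (?X n) = (sqrt (\<theta> * (1 - \<theta>)))\<^sup>2" for n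
  proof -
    have "variance (?X n) = expectation (\<lambda>x. (\<lambda>b. (of_bool b - \<theta>)\<^sup>2) (B (Suc n) x))"
      by (simp add: ex)
    also have "\<dots> = \<theta> * (1 - \<theta>)\<^sup>2 + (1 - \<theta>) * \<theta>\<^sup>2" by (subst expB) simp
    also have "\<dots> = (sqrt (\<theta> * (1 - \<theta>)))\<^sup>2" using th by (simp add: power2_eq_square algebra_simps)
    finally show ?thesis .
  qed
  have pos: "sqrt (\<theta> * (1 - \<theta>)) > 0" using th by simp
  show ?thesis
    using central_limit_theorem[OF indX ex pos sq var distrX] by simp
qed

lemma Hoeff:
  assumes n: "n > 0" and e: "e \<ge> 0"
  shows "prob {x\<in>space M. e \<le> \<bar>(\<Sum>i<n. of_bool (B (Suc i) x)) / real n - \<theta>\<bar>} \<le> 2 * exp (- 2 * real n * e\<^sup>2)"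
proof -
  let ?X = "\<lambda>i x. of_bool (B (Suc i) x) :: real"
  interpret H: Hoeffding_ineq_iid M "{..<n}" ?X "?X 0" 0 1 "expectation (?X 0)"
  proof unfold_locales
    show "indep_vars (\<lambda>_. borel) ?X {..<n}" using indX by (rule indep_vars_subset) auto
    show "distr M borel (?X i) = distr M borel (?X 0)" for i by (simp only: distrX)
    show "AE x in M. ?X 0 x \<in> {0..1}" by simp
  qed auto
  have ex: "expectation (?X 0) = \<theta>" using expB[of "\<lambda>b. of_bool b"] by simp
  have ne: "{..<n} \<noteq> {}" using n by auto
  show ?thesis using H.Hoeffding_ineq_abs_ge'[OF e _ ne] by (simp add: ex)
qed

end
end


lemma det_bound:
  fixes P :: "nat \<Rightarrow> real \<Rightarrow> real \<Rightarrow> real"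
  assumes n: "n > 0" and kn: "k \<le> n" and ph: "0 < \<phi>" "\<phi> < \<theta>" "\<theta> < 1"
    and te: "\<bar>real k / real n - \<theta>\<bar> < e" and eb: "e \<le> \<theta> - \<phi>" and P: "P \<in> {P_CH, P_PBR, P_X}"
  shows "\<bar>sqrt (real n) * (- ln (P n (real k / real n) \<phi>) / real n - KL \<theta> \<phi>)
           - ln (\<theta> / (1 - \<theta>) * ((1 - \<phi>) / \<phi>)) * sqrt (real n) * (real k / real n - \<theta>)\<bar>
         \<le> sqrt (real n) * (2 * ln (real n + 1) / real n + e\<^sup>2 * (1 / \<theta> + 1 / (1 - \<theta>)))"
proof -
  define t where "t = real k / real n"
  define c where "c = ln (\<theta> / (1 - \<theta>) * ((1 - \<phi>) / \<phi>))"
  define Cq where "Cq = 1 / \<theta> + 1 / (1 - \<theta>)"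
  have pt: "\<phi> \<le> t" using te eb unfolding t_def by linarith
  have ph1: "\<phi> < 1" using ph by simp
  have A: "\<bar>- ln (P n t \<phi>) - real n * KL t \<phi>\<bar> \<le> 2 * ln (real n + 1)"
    by (rule all_bound[OF n kn ph(1) ph1 t_def pt P])
  have t01: "0 \<le> t" "t \<le> 1" using kn n unfolding t_def by auto
  have T: "\<bar>KL t \<phi> - KL \<theta> \<phi> - c * (t - \<theta>)\<bar> \<le> (t - \<theta>)\<^sup>2 * Cq"
    unfolding c_def Cq_def by (rule KL_taylor) (use t01 ph in auto)
  have Cq: "Cq \<ge> 0" unfolding Cq_def using ph by simp
  have "(t - \<theta>)\<^sup>2 = \<bar>t - \<theta>\<bar>\<^sup>2" by simp
  also have "\<dots> \<le> e\<^sup>2" using te unfolding t_def by (intro power_mono) auto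
  finally have sq: "(t - \<theta>)\<^sup>2 * Cq \<le> e\<^sup>2 * Cq" using Cq by (intro mult_right_mono) auto
  have eq: "sqrt (real n) * (- ln (P n t \<phi>) / real n - KL \<theta> \<phi>) - c * sqrt (real n) * (t - \<theta>)
     = sqrt (real n) * ((- ln (P n t \<phi>) - real n * KL t \<phi>) / real n + (KL t \<phi> - KL \<theta> \<phi> - c * (t - \<theta>)))"
    using n by (simp add: field_simps)
  have "\<bar>(- ln (P n t \<phi>) - real n * KL t \<phi>) / real n + (KL t \<phi> - KL \<theta> \<phi> - c * (t - \<theta>))\<bar>
        \<le> 2 * ln (real n + 1) / real n + e\<^sup>2 * Cq"
  proof -
    have "\<bar>(- ln (P n t \<phi>) - real n * KL t \<phi>) / real n\<bar> \<le> 2 * ln (real n + 1) / real n"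
      using A n by (simp add: abs_divide divide_right_mono)
    then show ?thesis using T sq by linarith
  qed
  then have "sqrt (real n) * \<bar>(- ln (P n t \<phi>) - real n * KL t \<phi>) / real n + (KL t \<phi> - KL \<theta> \<phi> - c * (t - \<theta>))\<bar>
      \<le> sqrt (real n) * (2 * ln (real n + 1) / real n + e\<^sup>2 * Cq)"
    by (intro mult_left_mono) auto
  then show ?thesis unfolding t_def[symmetric] c_def[symmetric] Cq_def[symmetric] eq
    by (simp add: abs_mult)
qed

theorem theorem3:
  fixes M :: "'a measure" and B :: "nat \<Rightarrow> 'a \<Rightarrow> bool" and \<phi> \<theta> :: real
  assumes "prob_space M"
    and "0 < \<phi>" and "\<phi> < \<theta>" and "\<theta> < 1"
    and "prob_space.indep_vars M (\<lambda>_. count_space UNIV) B UNIV"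
    and "\<And>i. distr M (count_space UNIV) (B i) = measure_pmf (bernoulli_pmf \<theta>)"
  shows "\<forall>P \<in> {P_CH, P_PBR, P_X}.
    weak_conv_m
      (\<lambda>n. distr M borel (\<lambda>x.
          let \<Theta> = (\<Sum>i=1..n. of_bool (B i x)) / real n
          in sqrt (real n) * (- ln (P n \<Theta> \<phi>) / real n - KL \<theta> \<phi>)))
      (density lborel (normal_density 0
         (sqrt (\<theta> * (1 - \<theta>) * (ln (\<theta> / (1 - \<theta>) * ((1 - \<phi>) / \<phi>)))\<^sup>2))))"
proof
  fix P :: "nat \<Rightarrow> real \<Rightarrow> real \<Rightarrow> real" assume P: "P \<in> {P_CH, P_PBR, P_X}"
  note PS = assms(1)
  interpret prob_space M by (rule PS)
  have th: "0 < \<theta>" "\<theta> < 1" using assms by auto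
  note ind = assms(5) and dB = assms(6)
  have Bmeas[measurable]: "B i \<in> measurable M (count_space UNIV)" for i by (rule Bm[OF th ind dB])
  define c where "c = ln (\<theta> / (1 - \<theta>) * ((1 - \<phi>) / \<phi>))"
  define Cq where "Cq = 1 / \<theta> + 1 / (1 - \<theta>)"
  define a where "a = sqrt (\<theta> * (1 - \<theta>) * (ln (\<theta> / (1 - \<theta>) * ((1 - \<phi>) / \<phi>)))\<^sup>2)"
  define Z where "Z = (\<lambda>n x. (\<Sum>i<n. of_bool (B (Suc i) x) - \<theta>) / sqrt (real n * (sqrt (\<theta> * (1 - \<theta>)))\<^sup>2))"
  define T where "T = (\<lambda>n x. let \<Theta> = (\<Sum>i=1..n. of_bool (B i x)) / real n
          in sqrt (real n) * (- ln (P n \<Theta> \<phi>) / real n - KL \<theta> \<phi>))"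
  define K where "K = (\<lambda>n x. card ({1..n} \<inter> {i. B i x}))"
  have Kle: "K n x \<le> n" for n x
  proof -
    have "K n x \<le> card {1..n}" unfolding K_def by (intro card_mono) auto
    then show ?thesis by simp
  qed
  have sumK: "(\<Sum>i=1..n. of_bool (B i x)) = real (K n x)" for n x
    unfolding K_def by simp
  have sumK': "(\<Sum>i<n. of_bool (B (Suc i) x)) = real (K n x)" for n x
    using sum_bounds_lt_plus1[of "\<lambda>i. of_bool (B i x) :: real" n] sumK by simp
  have cpos: "c > 0"
  proof -
    have "\<phi> * (1 - \<theta>) < \<theta> * (1 - \<phi>)" using assms by (simp add: algebra_simps)
    then have "1 < \<theta> / (1 - \<theta>) * ((1 - \<phi>) / \<phi>)" using assms by (simp add: field_simps)
    then show ?thesis unfolding c_def by simp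
  qed
  have a_eq: "a = sqrt (\<theta> * (1 - \<theta>)) * c"
    unfolding a_def c_def[symmetric] using cpos by (simp add: real_sqrt_mult)
  have apos: "a > 0" unfolding a_eq using th cpos by simp
  have Zm: "Z n \<in> borel_measurable M" for n unfolding Z_def by measurable
  have Tm: "T n \<in> borel_measurable M" for n
  proof -
    let ?f = "\<lambda>x. (\<Sum>i=1..n. of_bool (B i x)) / real n :: real"
    let ?g = "\<lambda>\<Theta>. sqrt (real n) * (- ln (P n \<Theta> \<phi>) / real n - KL \<theta> \<phi>)"
    have "(\<lambda>x. ?g (?f x)) \<in> borel_measurable M"
    proof (rule measurable_finite_range[where f = ?f and g = ?g and V = "(\<lambda>k. real k / real n) ` {..n}"])
      show "?f \<in> borel_measurable M" by measurable
      show "finite ((\<lambda>k. real k / real n) ` {..n})" by simp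
      show "?f x \<in> (\<lambda>k. real k / real n) ` {..n}" for x
        unfolding sumK using Kle by auto
    qed
    then show ?thesis unfolding T_def Let_def .
  qed
  have clt: "weak_conv_m (\<lambda>n. distr M borel (Z n)) std_normal_distribution"
    unfolding Z_def by (rule CLT[OF th ind dB])
  have aZ: "a * Z n x = c * sqrt (real n) * (real (K n x) / real n - \<theta>)" if n: "n > 0" for n x
  proof -
    have s: "(\<Sum>i<n. of_bool (B (Suc i) x) - \<theta>) = real (K n x) - real n * \<theta>"
      by (simp add: sum_subtractf sumK')
    have q: "sqrt (real n * (sqrt (\<theta> * (1 - \<theta>)))\<^sup>2) = sqrt (real n) * sqrt (\<theta> * (1 - \<theta>))"
      using th by (simp add: real_sqrt_mult)
    have sn: "sqrt (real n) * sqrt (real n) = real n" by simp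
    have spos: "sqrt (real n) > 0" "sqrt (\<theta> * (1 - \<theta>)) > 0" using n th by auto
    have "a * Z n x = sqrt (\<theta> * (1 - \<theta>)) * c * ((real (K n x) - real n * \<theta>) / (sqrt (real n) * sqrt (\<theta> * (1 - \<theta>))))"
      unfolding Z_def a_eq s q ..
    also have "\<dots> = c * (real (K n x) - real n * \<theta>) / sqrt (real n)"
    proof -
      have gen: "ss * c * (X / (m * ss)) = c * X / m" if "ss \<noteq> 0" "m \<noteq> 0" for ss m X :: real
        using that by (simp add: field_simps)
      show ?thesis by (rule gen) (use spos in auto)
    qed
    also have "\<dots> = c * sqrt (real n) * ((real (K n x) - real n * \<theta>) / (sqrt (real n) * sqrt (real n)))"
      using spos by (simp add: field_simps)
    also have "(real (K n x) - real n * \<theta>) / (sqrt (real n) * sqrt (real n)) = real (K n x) / real n - \<theta>"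
      unfolding sn using n by (simp add: field_simps)
    finally show ?thesis .
  qed
  have TK: "T n x = sqrt (real n) * (- ln (P n (real (K n x) / real n) \<phi>) / real n - KL \<theta> \<phi>)" for n x
    unfolding T_def Let_def sumK ..
  have small: "(\<lambda>n. measure M {x\<in>space M. \<epsilon> < \<bar>T n x - a * Z n x\<bar>}) \<longlonglongrightarrow> 0" if eps: "\<epsilon> > 0" for \<epsilon>
  proof -
    define e where "e n = real n powr (-1/3)" for n :: nat
    define r where "r n = sqrt (real n) * (2 * ln (real n + 1) / real n + (e n)\<^sup>2 * Cq)" for n :: nat
    define q where "q n = 2 * exp (- 2 * real n * (e n)\<^sup>2)" for n :: nat
    have r0: "r \<longlonglongrightarrow> 0" unfolding r_def e_def by real_asymp
    have e0: "e \<longlonglongrightarrow> 0" unfolding e_def by real_asymp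
    have q0: "q \<longlonglongrightarrow> 0" unfolding q_def e_def by real_asymp
    have ev: "\<forall>\<^sub>F n in sequentially. n > 0 \<and> r n < \<epsilon> \<and> e n \<le> \<theta> - \<phi>"
    proof -
      have "\<forall>\<^sub>F n in sequentially. r n < \<epsilon>" using r0 eps by (rule order_tendstoD)
      moreover have "\<forall>\<^sub>F n in sequentially. e n < \<theta> - \<phi>" using e0 assms by (intro order_tendstoD) auto
      moreover have "\<forall>\<^sub>F n in sequentially. n > (0::nat)" by (rule eventually_gt_at_top)
      ultimately show ?thesis by eventually_elim auto
    qed
    have bound: "measure M {x\<in>space M. \<epsilon> < \<bar>T n x - a * Z n x\<bar>} \<le> q n"
      if nn: "n > 0 \<and> r n < \<epsilon> \<and> e n \<le> \<theta> - \<phi>" for n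
    proof -
      have n: "n > 0" using nn by simp
      have sub: "{x\<in>space M. \<epsilon> < \<bar>T n x - a * Z n x\<bar>}
          \<subseteq> {x\<in>space M. e n \<le> \<bar>(\<Sum>i<n. of_bool (B (Suc i) x)) / real n - \<theta>\<bar>}"
      proof safe
        fix x assume x: "x \<in> space M" "\<epsilon> < \<bar>T n x - a * Z n x\<bar>"
        show "e n \<le> \<bar>(\<Sum>i<n. of_bool (B (Suc i) x)) / real n - \<theta>\<bar>"
        proof (rule ccontr)
          assume "\<not> ?thesis"
          then have te: "\<bar>real (K n x) / real n - \<theta>\<bar> < e n" unfolding sumK' by simp
          have "\<bar>T n x - a * Z n x\<bar> \<le> r n"
            unfolding TK aZ[OF n] r_def c_def Cq_def
            by (rule det_bound[OF n Kle assms(2,3,4) te _ P]) (use nn in auto)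
          then show False using x nn by linarith
        qed
      qed
      have "measure M {x\<in>space M. \<epsilon> < \<bar>T n x - a * Z n x\<bar>}
          \<le> measure M {x\<in>space M. e n \<le> \<bar>(\<Sum>i<n. of_bool (B (Suc i) x)) / real n - \<theta>\<bar>}"
        by (rule finite_measure_mono[OF sub]) measurable
      also have "\<dots> \<le> q n" unfolding q_def
        by (rule Hoeff[OF th ind dB n]) (simp add: e_def)
      finally show ?thesis .
    qed
    show ?thesis
    proof (rule tendsto_sandwich[OF _ _ tendsto_const q0])
      show "\<forall>\<^sub>F n in sequentially. 0 \<le> measure M {x\<in>space M. \<epsilon> < \<bar>T n x - a * Z n x\<bar>}" by simp
      show "\<forall>\<^sub>F n in sequentially. measure M {x\<in>space M. \<epsilon> < \<bar>T n x - a * Z n x\<bar>} \<le> q n"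
        using ev by eventually_elim (rule bound)
    qed
  qed
  have "weak_conv_m (\<lambda>n. distr M borel (T n)) (density lborel (normal_density 0 a))"
    by (rule slutsky[OF PS apos Zm Tm clt small])
  then show "weak_conv_m
      (\<lambda>n. distr M borel (\<lambda>x.
          let \<Theta> = (\<Sum>i=1..n. of_bool (B i x)) / real n
          in sqrt (real n) * (- ln (P n \<Theta> \<phi>) / real n - KL \<theta> \<phi>)))
      (density lborel (normal_density 0
         (sqrt (\<theta> * (1 - \<theta>) * (ln (\<theta> / (1 - \<theta>) * ((1 - \<phi>) / \<phi>)))\<^sup>2))))"
    unfolding T_def a_def .
qed

end
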